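(* For every $N\ge3$, $\mathcal G_1(N)\cap\mathcal G_2(N)=\emptyset$.
   Context: Board and moves: $G=(V,E)$ finite, simple, connected, undirected; $N\ge3$ tokens, cops $C_1,\dots,C_{N-1}$ and robber $R$ (token $N$). A state is $s=(x^1,\dots,x^N,n)$ with $x^i\in V$ the position of token $i$ and $n$ the token to move; $S^n$ is the set of states with token $n$ to move; $s$ is a capture state if $x^i=x^N$ for some $i\le N-1$, and $S_{nc}$ is the set of noncapture states. In each turn the token to move moves to a vertex of its closed neighbourhood; order $C_1,\dots,C_{N-1},R,C_1,\dots$. State cop number. For $s\in S_{nc}$, $c(G|s)=c_N(G|s)$ is the minimum $k\in\{1,\dots,N-1\}$ for which there exist $k$ cops and strategies for them such that, starting from $s$, a capture (by any cop) occurs whatever the other $N-k$ tokens (including $R$) do; $c(G|s)=\infty$ if no such $k$ exists. $c(G)$ is the classical cop number of $G$. Graph classes. $\mathcal G(N)=\{G: c(G)>N-1\}$; $\mathcal G_1(N)=\{G\in\mathcal G(N):\exists s\in S_{nc}\text{ with } c(G|s)\in\{2,\dots,N-1\}\}$; $\mathcal G_2(N)=\{G\in\mathcal G(N): c(G|s)=\infty\text{ for all } s\in S^N\cap S_{nc}\}$. *)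

theory Defs
  imports Main "HOL-Library.Extended_Nat"
begin

type_synonym 'v graph = "'v set \<times> ('v \<Rightarrow> 'v \<Rightarrow> bool)"

definition fin_simple_connected_graph :: "'v graph \<Rightarrow> bool" where
  "fin_simple_connected_graph G \<longleftrightarrow>
     (let V = fst G; E = snd G in
      finite V \<and> V \<noteq> {} \<and>
      (\<forall>u w. E u w \<longrightarrow> u \<in> V \<and> w \<in> V) \<and>
      (\<forall>u w. E u w \<longrightarrow> E w u) \<and>
      (\<forall>u. \<not> E u u) \<and>
      (\<forall>u\<in>V. \<forall>w\<in>V. E\<^sup>*\<^sup>* u w))"

definition cnbr :: "'v graph \<Rightarrow> 'v \<Rightarrow> 'v set" where
  "cnbr G u = insert u {w. snd G u w}"

text \<open>State: cop positions (list of length k), robber position, and whether it is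
the cops' turn.\<close>

inductive classical_cops_force :: "'v graph \<Rightarrow> 'v list \<Rightarrow> 'v \<Rightarrow> bool \<Rightarrow> bool"
  for G where
  caught: "r \<in> set p \<Longrightarrow> classical_cops_force G p r t"
| cops_move: "\<lbrakk> r \<notin> set p; length p' = length p;
                \<forall>i<length p. p' ! i \<in> cnbr G (p ! i);
                classical_cops_force G p' r False \<rbrakk>
              \<Longrightarrow> classical_cops_force G p r True"
| robber_move: "\<lbrakk> r \<notin> set p; \<forall>r'\<in>cnbr G r. classical_cops_force G p r' True \<rbrakk>
              \<Longrightarrow> classical_cops_force G p r False"

definition cops_win :: "'v graph \<Rightarrow> nat \<Rightarrow> bool" where
  "cops_win G k \<longleftrightarrow> (\<exists>p. length p = k \<and> set p \<subseteq> fst G \<and>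
       (\<forall>r\<in>fst G. classical_cops_force G p r True))"

definition cop_number :: "'v graph \<Rightarrow> nat" where
  "cop_number G = (LEAST k. cops_win G k)"

text \<open>Tokens are 1..N; tokens 1..N-1 are cops, token N is the robber.
A state is (x, n): x i is the position of token i, n the token to move.\<close>

type_synonym 'v state = "(nat \<Rightarrow> 'v) \<times> nat"

definition valid_state :: "'v graph \<Rightarrow> nat \<Rightarrow> 'v state \<Rightarrow> bool" where
  "valid_state G N s \<longleftrightarrow> (\<forall>i\<in>{1..N}. fst s i \<in> fst G) \<and> snd s \<in> {1..N}"

definition is_capture :: "nat \<Rightarrow> 'v state \<Rightarrow> bool" where
  "is_capture N s \<longleftrightarrow> (\<exists>i\<in>{1..N-1}. fst s i = fst s N)"

definition next_tok :: "nat \<Rightarrow> nat \<Rightarrow> nat" where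
  "next_tok N n = (if n < N then n + 1 else 1)"

inductive forces_capture :: "'v graph \<Rightarrow> nat \<Rightarrow> nat set \<Rightarrow> 'v state \<Rightarrow> bool"
  for G N K where
  capture: "is_capture N (x, n) \<Longrightarrow> forces_capture G N K (x, n)"
| coalition_move: "\<lbrakk> \<not> is_capture N (x, n); n \<in> K; v \<in> cnbr G (x n);
                     forces_capture G N K (x(n := v), next_tok N n) \<rbrakk>
                   \<Longrightarrow> forces_capture G N K (x, n)"
| other_move: "\<lbrakk> \<not> is_capture N (x, n); n \<notin> K;
                 \<forall>v\<in>cnbr G (x n). forces_capture G N K (x(n := v), next_tok N n) \<rbrakk>
               \<Longrightarrow> forces_capture G N K (x, n)"

definition k_cops_force :: "'v graph \<Rightarrow> nat \<Rightarrow> nat \<Rightarrow> 'v state \<Rightarrow> bool" where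
  "k_cops_force G N k s \<longleftrightarrow>
     (\<exists>K. K \<subseteq> {1..N-1} \<and> card K = k \<and> forces_capture G N K s)"

definition state_cop_number :: "'v graph \<Rightarrow> nat \<Rightarrow> 'v state \<Rightarrow> enat" where
  "state_cop_number G N s =
     (if \<exists>k\<in>{1..N-1}. k_cops_force G N k s
      then enat (LEAST k. k \<in> {1..N-1} \<and> k_cops_force G N k s)
      else \<infinity>)"

definition GN :: "nat \<Rightarrow> 'v graph set" where
  "GN N = {G. fin_simple_connected_graph G \<and> cop_number G > N - 1}"

definition G1 :: "nat \<Rightarrow> 'v graph set" where
  "G1 N = {G \<in> GN N. \<exists>s. valid_state G N s \<and> \<not> is_capture N s \<and>
                        state_cop_number G N s \<in> enat ` {2..N-1}}"

definition G2 :: "nat \<Rightarrow> 'v graph set" where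
  "G2 N = {G \<in> GN N. \<forall>s. valid_state G N s \<and> snd s = N \<and> \<not> is_capture N s
                         \<longrightarrow> state_cop_number G N s = \<infinity>}"

end

theory Submission
  imports Defs
begin

lemma single_force:
  fixes G :: "'v graph" and x :: "nat \<Rightarrow> 'v" and N j n :: nat
  shows "j < N \<Longrightarrow> x N \<in> cnbr G (x j) \<Longrightarrow> 1 \<le> n \<Longrightarrow> n \<le> j \<Longrightarrow> forces_capture G N {j} (x, n)"
proof (induction "j - n" arbitrary: x n)
  case 0
  then have nj: "n = j" by simp
  show ?case
  proof (cases "is_capture N (x, n)")
    case True then show ?thesis by (rule forces_capture.capture)
  next
    case False
    have "is_capture N (x(n := x N), next_tok N n)"
      using nj 0 unfolding is_capture_def by auto
    then have "forces_capture G N {j} (x(n := x N), next_tok N n)"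
      by (rule forces_capture.capture[where n="next_tok N n", simplified])
    then show ?thesis
      using forces_capture.coalition_move[OF False, where K="{j}" and v="x N"] nj 0 by simp
  qed
next
  case (Suc m)
  show ?case
  proof (cases "is_capture N (x, n)")
    case True then show ?thesis by (rule forces_capture.capture)
  next
    case False
    have nt: "next_tok N n = n + 1" using Suc unfolding next_tok_def by auto
    have "\<forall>v\<in>cnbr G (x n). forces_capture G N {j} (x(n := v), next_tok N n)"
    proof
      fix v
      have a: "(x(n:=v)) N \<in> cnbr G ((x(n:=v)) j)" using Suc by auto
      have "m = j - (n+1)" using Suc by simp
      then show "forces_capture G N {j} (x(n := v), next_tok N n)"
        unfolding nt
        using Suc.hyps(1)[of "n+1" "x(n:=v)"] Suc a by simp
    qed
    moreover have "n \<notin> {j}" using Suc by simp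
    ultimately show ?thesis using False by (meson forces_capture.other_move)
  qed
qed

lemma walk:
  fixes G :: "'v graph" and x :: "nat \<Rightarrow> 'v" and N n :: nat and K :: "nat set"
  assumes G: "fin_simple_connected_graph G"
  shows "forces_capture G N K (x, n) \<Longrightarrow> 1 \<le> n \<Longrightarrow> n \<le> N \<Longrightarrow>
    (\<forall>i\<in>{1..N}. x i \<in> fst G) \<Longrightarrow> \<not> is_capture N (x, n) \<Longrightarrow>
    (\<exists>j\<in>K. n \<le> j \<and> j < N \<and> x N \<in> cnbr G (x j)) \<or>
    (\<exists>y. (\<forall>i\<in>{1..N}. y i \<in> fst G) \<and> \<not> is_capture N (y, N) \<and> forces_capture G N K (y, N))"
proof (induction "N - n" arbitrary: x n)
  case 0
  then have "n = N" by simp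
  then show ?case using 0 by blast
next
  case (Suc m)
  have nN: "n < N" using Suc by simp
  have nt: "next_tok N n = n + 1" using nN unfolding next_tok_def by auto
  have mm: "m = N - (n+1)" using Suc by simp
  have edgeV: "\<And>u w. snd G u w \<Longrightarrow> w \<in> fst G" using G
    unfolding fin_simple_connected_graph_def Let_def by blast
  from Suc.prems(1) show ?case
  proof (cases rule: forces_capture.cases)
    case capture then show ?thesis using Suc.prems by simp
  next
    case (coalition_move v)
    show ?thesis
    proof (cases "is_capture N (x(n:=v), n+1)")
      case True
      then obtain i where i: "i\<in>{1..N-1}" "(x(n:=v)) i = (x(n:=v)) N"
        unfolding is_capture_def by auto
      have "i = n" using i Suc.prems(5) nN unfolding is_capture_def
        by (auto split: if_splits)
      then have "v = x N" using i nN by auto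
      then show ?thesis using coalition_move nN by auto
    next
      case False
      have vV: "v \<in> fst G" using coalition_move(3) Suc.prems(4) Suc.prems(2,3) edgeV
        unfolding cnbr_def by auto
      have "(\<forall>i\<in>{1..N}. (x(n:=v)) i \<in> fst G)" using vV Suc.prems(4) by auto
      then have IH: "(\<exists>j\<in>K. n+1 \<le> j \<and> j < N \<and> (x(n:=v)) N \<in> cnbr G ((x(n:=v)) j)) \<or>
        (\<exists>y. (\<forall>i\<in>{1..N}. y i \<in> fst G) \<and> \<not> is_capture N (y, N) \<and> forces_capture G N K (y, N))"
        using Suc.hyps(1)[OF mm, of "x(n:=v)"] coalition_move(4) nt False nN by simp
      then show ?thesis
      proof
        assume "\<exists>j\<in>K. n+1 \<le> j \<and> j < N \<and> (x(n:=v)) N \<in> cnbr G ((x(n:=v)) j)"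
        then obtain j where j: "j\<in>K" "n+1 \<le> j" "j < N" "(x(n:=v)) N \<in> cnbr G ((x(n:=v)) j)"
          by blast
        have "n \<noteq> j" "n \<noteq> N" using j nN by auto
        then have "x N \<in> cnbr G (x j)" using j(4) by simp
        then show ?thesis using j by auto
      qed simp
    qed
  next
    case other_move
    have "x n \<in> cnbr G (x n)" unfolding cnbr_def by simp
    then have f: "forces_capture G N K (x, n+1)" using other_move nt by fastforce
    have nc: "\<not> is_capture N (x, n+1)" using Suc.prems(5) unfolding is_capture_def by simp
    have "(\<exists>j\<in>K. n+1 \<le> j \<and> j < N \<and> x N \<in> cnbr G (x j)) \<or>
        (\<exists>y. (\<forall>i\<in>{1..N}. y i \<in> fst G) \<and> \<not> is_capture N (y, N) \<and> forces_capture G N K (y, N))"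
      using Suc.hyps(1)[OF mm, of x] f nc Suc.prems(4) nN by simp
    then show ?thesis by (metis Suc_leD Suc_eq_plus1)
  qed
qed

theorem mainTheorem8:
  fixes N :: nat
  assumes "N \<ge> 3"
  shows "G1 N \<inter> G2 N = ({} :: 'v graph set)"
proof (rule ccontr)
  assume "G1 N \<inter> G2 N \<noteq> ({} :: 'v graph set)"
  then obtain G :: "'v graph" where g1: "G \<in> G1 N" and g2: "G \<in> G2 N" by blast
  have G: "fin_simple_connected_graph G" using g1 unfolding G1_def GN_def by auto
  from g1 obtain s where s: "valid_state G N s" "\<not> is_capture N s"
    "state_cop_number G N s \<in> enat ` {2..N-1}" unfolding G1_def by auto
  obtain x n where sxn: "s = (x, n)" by (cases s)
  have ex: "\<exists>k\<in>{1..N-1}. k_cops_force G N k s"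
    using s(3) unfolding state_cop_number_def by (auto split: if_splits)
  define k where "k = (LEAST k. k \<in> {1..N-1} \<and> k_cops_force G N k s)"
  have kv: "enat k \<in> enat ` {2..N-1}" using s(3) ex unfolding state_cop_number_def k_def by simp
  then have k2: "k \<in> {2..N-1}" by auto
  have kf: "k \<in> {1..N-1} \<and> k_cops_force G N k s"
    using ex unfolding k_def by (metis (mono_tags, lifting) LeastI)
  have not1: "\<not> k_cops_force G N 1 s"
  proof
    assume "k_cops_force G N 1 s"
    then have "k \<le> 1" unfolding k_def using assms by (intro Least_le) auto
    then show False using k2 by auto
  qed
  from kf obtain K where K: "K \<subseteq> {1..N-1}" "card K = k" "forces_capture G N K (x, n)"
    unfolding k_cops_force_def sxn by auto
  have vx: "\<forall>i\<in>{1..N}. x i \<in> fst G" "1 \<le> n" "n \<le> N"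
    using s(1) unfolding valid_state_def sxn by auto
  from walk[OF G K(3) vx(2,3,1)] s(2) sxn
  consider (a) j where "j\<in>K" "n \<le> j" "j < N" "x N \<in> cnbr G (x j)"
    | (b) y where "\<forall>i\<in>{1..N}. y i \<in> fst G" "\<not> is_capture N (y, N)" "forces_capture G N K (y, N)"
    by blast
  then show False
  proof cases
    case a
    have "forces_capture G N {j} (x, n)" using single_force[of j N x G n] a vx by simp
    then have "k_cops_force G N 1 s" unfolding k_cops_force_def sxn using a K(1)
      by (intro exI[of _ "{j}"]) auto
    then show False using not1 by simp
  next
    case b
    have vs: "valid_state G N (y, N)" using b assms unfolding valid_state_def by auto
    have "k_cops_force G N k (y, N)" unfolding k_cops_force_def using K b by auto
    then have "state_cop_number G N (y, N) \<noteq> \<infinity>"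
      using k2 unfolding state_cop_number_def by auto
    then show False using g2 vs b unfolding G2_def by auto
  qed
qed

end
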